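(* Fix $\lambda \geqslant 0$ and let $g(\lambda) = (1-e^{-\lambda})/\lambda$ for $\lambda>0$, $g(0)=1$. For a compactly supported Borel probability measure $\rho$ on $\mathbb R$ with $\operatorname{supp}\rho \subset [0,+\infty)$ and $\langle \rho, x\rangle = \int x\,d\rho(x) \neq 0$, define the measure $$A(\rho) = \left(1 - g(\lambda) + g(\lambda)\frac{x}{\langle \rho, x\rangle}\right)\rho,$$ i.e. the measure with density $x \mapsto 1 - g(\lambda) + g(\lambda)x/\langle\rho,x\rangle$ with respect to $\rho$. Let $\rho_0$ be such a measure, let $\rho_t = A^t(\rho_0)$ for $t \in \mathbb N$, and let $\bar x_t = \langle \rho_t, x\rangle$. Then for every $t \in \mathbb N$, $\bar x_{t+1} - \bar x_t \geqslant 0$.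
   Context: Probability densities are identified with Borel probability measures (nonnegative Radon measures of total mass $1$) on $\mathbb R$; for a measure $\rho$ and a function $\phi$, $\langle \rho,\phi\rangle = \int \phi\,d\rho$. $\mathbb N$ includes $0$. *)

theory Defs
  imports "HOL-Probability.Probability"
begin

definition gfun :: "real \<Rightarrow> real" where
  "gfun l = (if l = 0 then 1 else (1 - exp (- l)) / l)"

definition mean :: "real measure \<Rightarrow> real" where
  "mean \<rho> = (\<integral>x. x \<partial>\<rho>)"

definition Aop :: "real \<Rightarrow> real measure \<Rightarrow> real measure" where
  "Aop l \<rho> = density \<rho> (\<lambda>x. ennreal (1 - gfun l + gfun l * x / mean \<rho>))"

end

theory Submission
  imports Defs
begin

lemma gfun_bounds: assumes "l \<ge> 0" shows "0 \<le> gfun l" "gfun l \<le> 1"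
proof -
  have e: "exp (-l) \<ge> 1 + (-l)" by (rule exp_ge_add_one_self)
  show "0 \<le> gfun l" using assms by (auto simp: gfun_def)
  show "gfun l \<le> 1" using assms e by (auto simp: gfun_def divide_le_eq)
qed

definition Inv :: "real set \<Rightarrow> real measure \<Rightarrow> bool" where
  "Inv K \<rho> \<longleftrightarrow> prob_space \<rho> \<and> sets \<rho> = sets borel \<and> (AE x in \<rho>. x \<in> K) \<and> mean \<rho> > 0"

lemma step:
  assumes l: "l \<ge> 0" and K: "compact K" "K \<subseteq> {0..}" and I: "Inv K \<rho>"
  shows "Inv K (Aop l \<rho>) \<and> mean (Aop l \<rho>) \<ge> mean \<rho>"
proof -
  interpret prob_space \<rho> using I by (simp add: Inv_def)
  have sets[measurable_cong]: "sets \<rho> = sets borel" using I by (simp add: Inv_def)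
  have aeK: "AE x in \<rho>. x \<in> K" using I by (simp add: Inv_def)
  define m where "m = mean \<rho>"
  have mpos: "m > 0" using I by (simp add: Inv_def m_def)
  define g where "g = gfun l"
  have g0: "0 \<le> g" and g1: "g \<le> 1" using gfun_bounds[OF l] by (auto simp: g_def)
  obtain B where B: "\<And>x. x \<in> K \<Longrightarrow> norm x \<le> B"
    using compact_imp_bounded[OF K(1)] unfolding bounded_iff by blast
  have intx: "integrable \<rho> (\<lambda>x. x)"
    by (rule integrable_const_bound[where B=B], rule AE_mp[OF aeK], rule AE_I2) (auto dest: B)
  have intx2: "integrable \<rho> (\<lambda>x. x\<^sup>2)"
  proof (rule integrable_const_bound[where B="B*B"], rule AE_mp[OF aeK], rule AE_I2, safe)
    fix x assume "x \<in> K"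
    then have "\<bar>x\<bar> \<le> B" using B by simp
    then have "\<bar>x\<bar> * \<bar>x\<bar> \<le> B * B" by (intro mult_mono) auto
    then show "norm (x\<^sup>2) \<le> B * B" by (simp add: power2_eq_square abs_mult)
  qed simp
  define f where "f x = 1 - g + g * x / m" for x
  have fmeas[measurable]: "f \<in> borel_measurable \<rho>" unfolding f_def by simp
  have fnn: "AE x in \<rho>. 0 \<le> f x"
    using aeK
  proof (rule AE_mp, intro AE_I2 impI)
    fix x assume "x \<in> K"
    then have "x \<ge> 0" using K by auto
    have "g * m \<le> 1 * m" using g1 mpos by (intro mult_right_mono) auto
    moreover have "0 \<le> g * x" using g0 \<open>x \<ge> 0\<close> by simp
    ultimately have "0 \<le> (1 - g) * m + g * x" by (simp add: algebra_simps)
    then have "0 \<le> ((1 - g) * m + g * x) / m" using mpos by simp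
    also have "((1 - g) * m + g * x) / m = f x" unfolding f_def using mpos by (simp add: field_simps)
    finally show "0 \<le> f x" .
  qed
  have A: "Aop l \<rho> = density \<rho> (\<lambda>x. ennreal (f x))"
    by (simp add: Aop_def f_def g_def m_def)
  have intf: "integrable \<rho> f" unfolding f_def using intx by auto
  have intf1: "(\<integral>x. f x \<partial>\<rho>) = 1"
    unfolding f_def using intx mpos by (simp add: prob_space m_def mean_def)
  have sA: "sets (Aop l \<rho>) = sets borel" using A sets by simp
  have spA: "space (Aop l \<rho>) = space \<rho>" using A by simp
  have "emeasure (Aop l \<rho>) (space (Aop l \<rho>)) = (\<integral>\<^sup>+ x. ennreal (f x) \<partial>\<rho>)"
  proof -
    have "emeasure (Aop l \<rho>) (space (Aop l \<rho>)) = (\<integral>\<^sup>+ x. ennreal (f x) * indicator (space \<rho>) x \<partial>\<rho>)"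
      unfolding spA unfolding A by (rule emeasure_density) simp_all
    also have "\<dots> = (\<integral>\<^sup>+ x. ennreal (f x) \<partial>\<rho>)"
      by (rule nn_integral_cong) simp
    finally show ?thesis .
  qed
  also have "\<dots> = ennreal (\<integral>x. f x \<partial>\<rho>)"
    by (rule nn_integral_eq_integral[OF intf fnn])
  finally have "emeasure (Aop l \<rho>) (space (Aop l \<rho>)) = 1" using intf1 by simp
  then have pA: "prob_space (Aop l \<rho>)" by (rule prob_spaceI)
  have aeA: "AE x in Aop l \<rho>. x \<in> K"
    unfolding A by (subst AE_density) (simp, rule AE_mp[OF aeK], rule AE_I2, simp)
  have "mean (Aop l \<rho>) = (\<integral>x. f x * x \<partial>\<rho>)"
    unfolding A mean_def by (subst integral_density) (auto simp: fnn)
  also have "\<dots> = (\<integral>x. (1 - g) * x + (g / m) * x\<^sup>2 \<partial>\<rho>)"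
    by (rule Bochner_Integration.integral_cong) (auto simp: f_def field_simps power2_eq_square)
  also have "\<dots> = (1 - g) * m + (g / m) * (\<integral>x. x\<^sup>2 \<partial>\<rho>)"
    using intx intx2 by (simp add: m_def mean_def)
  finally have meanA: "mean (Aop l \<rho>) = (1 - g) * m + (g / m) * (\<integral>x. x\<^sup>2 \<partial>\<rho>)" .
  have var: "(\<integral>x. x\<^sup>2 \<partial>\<rho>) \<ge> m\<^sup>2"
  proof -
    have "0 \<le> variance (\<lambda>x. x)" by (rule integral_nonneg_AE) auto
    also have "\<dots> = (\<integral>x. x\<^sup>2 \<partial>\<rho>) - m\<^sup>2"
      using variance_eq[OF intx intx2] by (simp add: m_def mean_def)
    finally show ?thesis by simp
  qed
  have "(g / m) * (\<integral>x. x\<^sup>2 \<partial>\<rho>) \<ge> (g / m) * m\<^sup>2"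
    using var g0 mpos by (intro mult_left_mono) auto
  then have "(g / m) * (\<integral>x. x\<^sup>2 \<partial>\<rho>) \<ge> g * m" using mpos by (simp add: power2_eq_square)
  then have ge: "mean (Aop l \<rho>) \<ge> m" using meanA by (simp add: algebra_simps)
  show ?thesis using ge mpos pA sA aeA by (simp add: Inv_def m_def)
qed

theorem mainTheorem1:
  fixes l :: real and \<rho>0 :: "real measure" and t :: nat
  assumes "l \<ge> 0"
    and "prob_space \<rho>0"
    and "sets \<rho>0 = sets borel"
    and "\<exists>K. compact K \<and> K \<subseteq> {0..} \<and> emeasure \<rho>0 (UNIV - K) = 0"
    and "mean \<rho>0 \<noteq> 0"
  shows "mean ((Aop l ^^ Suc t) \<rho>0) - mean ((Aop l ^^ t) \<rho>0) \<ge> 0"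
proof -
  obtain K where K: "compact K" "K \<subseteq> {0..}" "emeasure \<rho>0 (UNIV - K) = 0"
    using assms(4) by blast
  have sp: "space \<rho>0 = UNIV" using sets_eq_imp_space_eq[OF assms(3)] by simp
  have Kc: "closed K" using K(1) by (rule compact_imp_closed)
  have "UNIV - K \<in> sets \<rho>0" using assms(3) Kc by simp
  then have aeK: "AE x in \<rho>0. x \<in> K"
    using K(3) by (intro AE_I[where N="UNIV - K"]) (auto simp: sp)
  have "0 \<le> mean \<rho>0" unfolding mean_def
    by (rule integral_nonneg_AE, rule AE_mp[OF aeK], rule AE_I2) (use K(2) in auto)
  then have I0: "Inv K \<rho>0" using assms aeK by (simp add: Inv_def)
  have It: "Inv K ((Aop l ^^ n) \<rho>0)" for n
  proof (induction n)
    case 0 then show ?case using I0 by simp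
  next
    case (Suc n) then show ?case using step[OF assms(1) K(1,2) Suc] by simp
  qed
  show ?thesis using step[OF assms(1) K(1,2) It[of t]] by simp
qed

end
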